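(* Let $T$ be a rooted tree whose leaves are the keys $[n]$, for each node $v$ let $R_v$ be the set of leaves below $v$, let $p\in[0,1]^n$ with $\sum_ip_i$ an integer, and let $S$ be the random output of the hierarchy summarization procedure applied to $T$ and $p$. Let $Q=R_1\cup\dots\cup R_\ell$ be a union of $\ell$ pairwise disjoint ranges $R_h=R_{v_h}$. Then, with $p(R)=\sum_{i\in R}p_i$, the discrepancy satisfies $\big||S\cap Q|-p(Q)\big|\le\ell$, and it is distributed as the error of a VarOpt sample on a subset of expected size $\mu=\sum_{h=1}^\ell\big(p(R_h)-\lfloor p(R_h)\rfloor\big)\le\ell$: namely, the random variables $Y_h=|S\cap R_h|-\lfloor p(R_h)\rfloor$ take values in $\{0,1\}$, satisfy $\mathbb{E}[Y_h]=p(R_h)-\lfloor p(R_h)\rfloor$, satisfy for every $J\subseteq\{1,\dots,\ell\}$ the bounds $\mathbb{E}[\prod_{h\in J}Y_h]\le\prod_{h\in J}\mathbb{E}[Y_h]$ and $\mathbb{E}[\prod_{h\in J}(1-Y_h)]\le\prod_{h\in J}(1-\mathbb{E}[Y_h])$, and $|S\cap Q|-p(Q)=\sum_{h=1}^\ell Y_h-\mu$.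
   Context: Pair-Aggregate$(p,i,j)$, for indices $i\ne j$ with $0<p_i,p_j<1$, modifies only entries $i,j$ of the current vector $p$: if $p_i+p_j<1$, then with probability $p_i/(p_i+p_j)$ set $(p_i,p_j)\leftarrow(p_i+p_j,0)$ and otherwise $(p_i,p_j)\leftarrow(0,p_i+p_j)$; if $p_i+p_j\ge1$, then with probability $(1-p_j)/(2-p_i-p_j)$ set $(p_i,p_j)\leftarrow(1,p_i+p_j-1)$ and otherwise $(p_i,p_j)\leftarrow(p_i+p_j-1,1)$ (fresh independent randomness each call). The hierarchy summarization procedure: starting from $p$, while at least two indices have current value in $(0,1)$, choose a pair $i\ne j$ of such indices such that no other pair of indices with current values in $(0,1)$ has a lowest common ancestor in $T$ that is a proper descendant of $\mathrm{LCA}(i,j)$ (ties arbitrary), and apply Pair-Aggregate to it; at termination output $S=\{i:p_i=1\}$. A VarOpt sample is a random subset with inclusion probabilities given, fixed size, and the inclusion/exclusion product bounds $\Pr[J\subseteq S]\le\prod_{i\in J}p_i$, $\Pr[J\cap S=\emptyset]\le\prod_{i\in J}(1-p_i)$. *)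

theory Defs
  imports "HOL-Probability.Probability"
begin

datatype ktree = Leaf nat | Node "ktree list"

fun leaves :: "ktree \<Rightarrow> nat list" where
  "leaves (Leaf i) = [i]"
| "leaves (Node ts) = concat (map leaves ts)"

text \<open>All nodes of a tree (the subtrees rooted at them); the descendants of v are subtrees v.\<close>
fun subtrees :: "ktree \<Rightarrow> ktree set" where
  "subtrees (Leaf i) = {Leaf i}"
| "subtrees (Node ts) = insert (Node ts) (\<Union>t\<in>set ts. subtrees t)"

text \<open>Internal nodes have at least one child (so all leaves of the tree are keys).\<close>
fun no_empty_node :: "ktree \<Rightarrow> bool" where
  "no_empty_node (Leaf i) = True"
| "no_empty_node (Node ts) = (ts \<noteq> [] \<and> (\<forall>t\<in>set ts. no_empty_node t))"

definition tree_on :: "ktree \<Rightarrow> nat \<Rightarrow> bool" where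
  "tree_on T n \<longleftrightarrow> no_empty_node T \<and> distinct (leaves T) \<and> set (leaves T) = {1..n}"

definition range_of :: "ktree \<Rightarrow> nat set" where
  "range_of v = set (leaves v)"

definition lca :: "ktree \<Rightarrow> nat \<Rightarrow> nat \<Rightarrow> ktree" where
  "lca T i j = (THE v. v \<in> subtrees T \<and> i \<in> range_of v \<and> j \<in> range_of v \<and>
      (\<forall>w\<in>subtrees v. w \<noteq> v \<longrightarrow> \<not> (i \<in> range_of w \<and> j \<in> range_of w)))"

definition frac_idx :: "nat \<Rightarrow> (nat \<Rightarrow> real) \<Rightarrow> nat set" where
  "frac_idx n q = {i \<in> {1..n}. 0 < q i \<and> q i < 1}"

definition pair_aggregate :: "(nat \<Rightarrow> real) \<Rightarrow> nat \<Rightarrow> nat \<Rightarrow> (nat \<Rightarrow> real) pmf" where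
  "pair_aggregate q i j =
     (if q i + q j < 1 then
        map_pmf (\<lambda>b. if b then q(i := q i + q j, j := 0) else q(i := 0, j := q i + q j))
          (bernoulli_pmf (q i / (q i + q j)))
      else
        map_pmf (\<lambda>b. if b then q(i := 1, j := q i + q j - 1) else q(i := q i + q j - 1, j := 1))
          (bernoulli_pmf ((1 - q j) / (2 - q i - q j))))"

definition admissible_pair :: "ktree \<Rightarrow> nat \<Rightarrow> (nat \<Rightarrow> real) \<Rightarrow> nat \<times> nat \<Rightarrow> bool" where
  "admissible_pair T n q ij \<longleftrightarrow>
     (let i = fst ij; j = snd ij in
      i \<noteq> j \<and> i \<in> frac_idx n q \<and> j \<in> frac_idx n q \<and>
      (\<forall>k\<in>frac_idx n q. \<forall>l\<in>frac_idx n q. k \<noteq> l \<longrightarrow>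
          \<not> (lca T k l \<in> subtrees (lca T i j) \<and> lca T k l \<noteq> lca T i j)))"

text \<open>A tie-breaking rule: in every state with at least two fractional keys, it selects an
  admissible pair.\<close>
definition valid_selector :: "ktree \<Rightarrow> nat \<Rightarrow> ((nat \<Rightarrow> real) \<Rightarrow> nat \<times> nat) \<Rightarrow> bool" where
  "valid_selector T n sel \<longleftrightarrow>
     (\<forall>q. 2 \<le> card (frac_idx n q) \<longrightarrow> admissible_pair T n q (sel q))"

text \<open>Up to k iterations of the while loop (each iteration makes at least one fractional
  entry integral, so n iterations always reach termination).\<close>
primrec hsum_iter :: "nat \<Rightarrow> ((nat \<Rightarrow> real) \<Rightarrow> nat \<times> nat) \<Rightarrow> nat \<Rightarrow> (nat \<Rightarrow> real) \<Rightarrow> (nat \<Rightarrow> real) pmf" where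
  "hsum_iter n sel 0 q = return_pmf q"
| "hsum_iter n sel (Suc k) q =
     (if 2 \<le> card (frac_idx n q)
      then pair_aggregate q (fst (sel q)) (snd (sel q)) \<bind> hsum_iter n sel k
      else return_pmf q)"

definition hier_summarize :: "nat \<Rightarrow> ((nat \<Rightarrow> real) \<Rightarrow> nat \<times> nat) \<Rightarrow> (nat \<Rightarrow> real) \<Rightarrow> nat set pmf" where
  "hier_summarize n sel p = map_pmf (\<lambda>q. {i \<in> {1..n}. q i = 1}) (hsum_iter n sel n p)"

end

theory Submission
  imports Defs
begin


lemma subtrees_refl: "t \<in> subtrees t" by (cases t) auto

lemma subtrees_trans: "w \<in> subtrees v \<Longrightarrow> v \<in> subtrees u \<Longrightarrow> w \<in> subtrees u"
  by (induction u rule: subtrees.induct) auto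

lemma subtrees_range: "w \<in> subtrees v \<Longrightarrow> range_of w \<subseteq> range_of v"
  by (induction v rule: subtrees.induct) (auto simp: range_of_def)

lemma subtrees_size: "w \<in> subtrees v \<Longrightarrow> w = v \<or> size w < size v"
proof (induction v rule: subtrees.induct)
  case (1 i) then show ?case by simp
next
  case (2 ts)
  show ?case
  proof (cases "w = Node ts")
    case False
    then obtain t where t: "t \<in> set ts" "w \<in> subtrees t" using 2(2) by auto
    have "w = t \<or> size w < size t" using 2(1)[OF t] .
    moreover have "size t < size (Node ts)" using size_list_estimation'[OF t(1), of "size t" size] by simp
    ultimately show ?thesis by auto
  qed simp
qed

lemma subtrees_antisym: "w \<in> subtrees v \<Longrightarrow> v \<in> subtrees w \<Longrightarrow> w = v"
  using subtrees_size[of w v] subtrees_size[of v w] by auto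

lemma sub_props: "w \<in> subtrees T \<Longrightarrow> no_empty_node T \<Longrightarrow> distinct (leaves T) \<Longrightarrow>
   no_empty_node w \<and> distinct (leaves w)"
  by (induction T rule: subtrees.induct) (auto simp: distinct_concat_iff)

lemma distinct_concat_same:
  "distinct (concat (map f ts)) \<Longrightarrow> t1 \<in> set ts \<Longrightarrow> t2 \<in> set ts \<Longrightarrow> x \<in> set (f t1) \<Longrightarrow> x \<in> set (f t2) \<Longrightarrow> t1 = t2"
  by (induction ts) auto

lemma chain: "no_empty_node T \<Longrightarrow> distinct (leaves T) \<Longrightarrow> v \<in> subtrees T \<Longrightarrow> w \<in> subtrees T \<Longrightarrow>
   x \<in> range_of v \<Longrightarrow> x \<in> range_of w \<Longrightarrow> v \<in> subtrees w \<or> w \<in> subtrees v"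
proof (induction T arbitrary: v w rule: subtrees.induct)
  case (1 i) then show ?case by simp
next
  case (2 ts)
  show ?case
  proof (cases "v = Node ts \<or> w = Node ts")
    case True then show ?thesis using 2 by auto
  next
    case False
    then obtain t1 t2 where t: "t1 \<in> set ts" "v \<in> subtrees t1" "t2 \<in> set ts" "w \<in> subtrees t2"
      using 2 by auto
    have "x \<in> range_of t1" "x \<in> range_of t2" using subtrees_range t 2 by blast+
    then have "t1 = t2" using distinct_concat_same[of leaves ts t1 t2 x] 2(3) t by (auto simp: range_of_def)
    moreover have "distinct (leaves t1)" using 2(3) t(1) by (auto simp: distinct_concat_iff)
    ultimately show ?thesis using 2(1)[of t1 v w] 2 t by auto
  qed
qed

lemma lca_ex1:
  assumes ne: "no_empty_node T" and d: "distinct (leaves T)" and i: "i \<in> range_of T" and j: "j \<in> range_of T"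
  shows "\<exists>!v. v \<in> subtrees T \<and> i \<in> range_of v \<and> j \<in> range_of v \<and>
      (\<forall>w\<in>subtrees v. w \<noteq> v \<longrightarrow> \<not> (i \<in> range_of w \<and> j \<in> range_of w))"
proof -
  define P where "P v \<longleftrightarrow> v \<in> subtrees T \<and> i \<in> range_of v \<and> j \<in> range_of v" for v
  have PT: "P T" using i j subtrees_refl unfolding P_def by blast
  obtain v where v: "P v" and vmin: "\<And>y. P y \<Longrightarrow> size v \<le> size y"
    using ex_has_least_nat[of P T "size :: ktree \<Rightarrow> nat", OF PT] by auto
  have mv: "\<forall>w\<in>subtrees v. w \<noteq> v \<longrightarrow> \<not> (i \<in> range_of w \<and> j \<in> range_of w)"
  proof (intro ballI impI notI)
    fix w assume w: "w \<in> subtrees v" "w \<noteq> v" "i \<in> range_of w \<and> j \<in> range_of w"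
    have "w \<in> subtrees T" using w(1) v subtrees_trans unfolding P_def by blast
    then have "P w" using w(3) unfolding P_def by simp
    then have "size v \<le> size w" using vmin by simp
    moreover have "size w < size v" using subtrees_size[OF w(1)] w(2) by simp
    ultimately show False by simp
  qed
  have Pv: "v \<in> subtrees T \<and> i \<in> range_of v \<and> j \<in> range_of v" using v unfolding P_def .
  show ?thesis
  proof (rule ex1I[of _ v])
    show "v \<in> subtrees T \<and> i \<in> range_of v \<and> j \<in> range_of v \<and> (\<forall>w\<in>subtrees v. w \<noteq> v \<longrightarrow> \<not> (i \<in> range_of w \<and> j \<in> range_of w))"
      using Pv mv by simp
  next
    fix u assume u: "u \<in> subtrees T \<and> i \<in> range_of u \<and> j \<in> range_of u \<and> (\<forall>w\<in>subtrees u. w \<noteq> u \<longrightarrow> \<not> (i \<in> range_of w \<and> j \<in> range_of w))"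
    have c: "u \<in> subtrees v \<or> v \<in> subtrees u"
      using chain[OF ne d, of u v i] u Pv by simp
    show "u = v"
    proof (rule ccontr)
      assume ne': "u \<noteq> v"
      from c show False
      proof
        assume "u \<in> subtrees v" then show False using mv ne' u by auto
      next
        assume "v \<in> subtrees u" then show False using u ne' Pv by auto
      qed
    qed
  qed
qed

lemma lca_props:
  assumes "no_empty_node T" "distinct (leaves T)" "i \<in> range_of T" "j \<in> range_of T"
  shows "lca T i j \<in> subtrees T \<and> i \<in> range_of (lca T i j) \<and> j \<in> range_of (lca T i j) \<and>
      (\<forall>w\<in>subtrees (lca T i j). w \<noteq> lca T i j \<longrightarrow> \<not> (i \<in> range_of w \<and> j \<in> range_of w))"
  unfolding lca_def by (rule theI'[OF lca_ex1[OF assms]])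

lemma lca_inside:
  assumes ne: "no_empty_node T" and d: "distinct (leaves T)" and vT: "u \<in> subtrees T"
    and k: "k \<in> range_of u" and i: "i \<in> range_of u"
  shows "lca T k i \<in> subtrees u"
proof -
  have kT: "k \<in> range_of T" "i \<in> range_of T" using subtrees_range vT k i by blast+
  define l where "l = lca T k i"
  have L1: "l \<in> subtrees T" and L2: "k \<in> range_of l" and L3: "i \<in> range_of l"
    and L4: "\<forall>w\<in>subtrees l. w \<noteq> l \<longrightarrow> \<not> (k \<in> range_of w \<and> i \<in> range_of w)"
    using lca_props[OF ne d kT] unfolding l_def by auto
  have c: "l \<in> subtrees u \<or> u \<in> subtrees l"
    using chain[OF ne d L1 vT L2 k] .
  show ?thesis unfolding l_def[symmetric]
  proof (rule ccontr)
    assume nl: "l \<notin> subtrees u"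
    then have "u \<in> subtrees l" using c by simp
    moreover have "u \<noteq> l" using nl subtrees_refl[of u] by auto
    ultimately show False using L4 k i by auto
  qed
qed

lemma lca_outside:
  assumes ne: "no_empty_node T" and d: "distinct (leaves T)" and vT: "u \<in> subtrees T"
    and i: "i \<in> range_of u" and j: "j \<notin> range_of u" and jT: "j \<in> range_of T"
  shows "u \<in> subtrees (lca T i j) \<and> lca T i j \<notin> subtrees u"
proof -
  have iT: "i \<in> range_of T" using subtrees_range vT i by blast
  define l where "l = lca T i j"
  have L1: "l \<in> subtrees T" and L2: "i \<in> range_of l" and L3: "j \<in> range_of l"
    using lca_props[OF ne d iT jT] unfolding l_def by auto
  have n: "l \<notin> subtrees u"
  proof
    assume "l \<in> subtrees u"
    then have "range_of l \<subseteq> range_of u" by (rule subtrees_range)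
    then show False using L3 j by auto
  qed
  have c: "l \<in> subtrees u \<or> u \<in> subtrees l"
    using chain[OF ne d L1 vT L2 i] .
  show ?thesis unfolding l_def[symmetric] using n c by simp
qed

lemma crossing:
  assumes tr: "tree_on T n" and vT: "u \<in> subtrees T"
    and adm: "admissible_pair T n q (i, j)" and i: "i \<in> range_of u" and j: "j \<notin> range_of u"
  shows "frac_idx n q \<inter> range_of u = {i}"
proof -
  have ne: "no_empty_node T" and d: "distinct (leaves T)" and rT: "range_of T = {1..n}"
    using tr by (auto simp: tree_on_def range_of_def)
  have fr: "i \<in> frac_idx n q" "j \<in> frac_idx n q" "i \<noteq> j" and
    A: "\<forall>k\<in>frac_idx n q. \<forall>l\<in>frac_idx n q. k \<noteq> l \<longrightarrow>
          \<not> (lca T k l \<in> subtrees (lca T i j) \<and> lca T k l \<noteq> lca T i j)"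
    using adm by (auto simp: admissible_pair_def Let_def)
  have jT: "j \<in> range_of T" using fr rT by (auto simp: frac_idx_def)
  note O = lca_outside[OF ne d vT i j jT]
  show ?thesis
  proof (rule ccontr)
    assume "frac_idx n q \<inter> range_of u \<noteq> {i}"
    then obtain k where k: "k \<in> frac_idx n q" "k \<in> range_of u" "k \<noteq> i" using fr i by blast
    have ki: "lca T k i \<in> subtrees u" using lca_inside[OF ne d vT k(2) i] .
    have 1: "lca T k i \<in> subtrees (lca T i j)" using subtrees_trans[OF ki] O by simp
    have 2: "lca T k i \<noteq> lca T i j" using ki O by auto
    have "\<not> (lca T k i \<in> subtrees (lca T i j) \<and> lca T k i \<noteq> lca T i j)"
      using A k(1,3) fr(1) by simp
    then show False using 1 2 by simp
  qed
qed

lemma lca_sym: "lca T i j = lca T j i"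
  unfolding lca_def by (rule arg_cong[where f=The]) (rule ext, blast)

lemma adm_sym: "admissible_pair T n q (i, j) \<longleftrightarrow> admissible_pair T n q (j, i)"
  unfolding admissible_pair_def Let_def by (auto simp: lca_sym)



lemma pa_set:
  assumes "0 < q i" "q i < 1" "0 < q j" "q j < 1" "i \<noteq> j" "q' \<in> set_pmf (pair_aggregate q i j)"
  shows "(\<forall>k. k \<noteq> i \<and> k \<noteq> j \<longrightarrow> q' k = q k) \<and> q' i + q' j = q i + q j \<and>
     0 \<le> q' i \<and> q' i \<le> 1 \<and> 0 \<le> q' j \<and> q' j \<le> 1 \<and> (q' i \<in> {0,1} \<or> q' j \<in> {0,1})"
  using assms unfolding pair_aggregate_def by (auto split: if_splits)

lemma pa_finite: "finite (set_pmf (pair_aggregate q i j))"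
  unfolding pair_aggregate_def by auto

lemma pa_exp:
  fixes f :: "real \<Rightarrow> real \<Rightarrow> real"
  assumes "0 < q i" "q i < 1" "0 < q j" "q j < 1" "i \<noteq> j"
  shows "measure_pmf.expectation (pair_aggregate q i j) (\<lambda>q'. f (q' i) (q' j)) =
    (let x = q i; y = q j; s = x + y in
     if s < 1 then (x / s) * f s 0 + (1 - x / s) * f 0 s
     else ((1 - y) / (2 - x - y)) * f 1 (s - 1) + (1 - (1 - y) / (2 - x - y)) * f (s - 1) 1)"
proof -
  have a: "0 \<le> q i / (q i + q j)" "q i / (q i + q j) \<le> 1" using assms by auto
  have b: "0 \<le> (1 - q j) / (2 - q i - q j)" "(1 - q j) / (2 - q i - q j) \<le> 1" using assms by auto
  show ?thesis
    unfolding pair_aggregate_def Let_def using assms a b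
    using assms unfolding pair_aggregate_def by (auto split: if_splits)
qed

lemma pa_arith:
  fixes x y :: real and a b :: nat
  assumes "0 < x" "x < 1" "0 < y" "y < 1" "a \<le> 1" "b \<le> 1"
    and g: "g = (\<lambda>z. z) \<or> g = (\<lambda>z. 1 - z)"
  shows "(let s = x + y in
     if s < 1 then (x / s) * (g s ^ a * g 0 ^ b) + (1 - x / s) * (g 0 ^ a * g s ^ b)
     else ((1 - y) / (2 - x - y)) * (g 1 ^ a * g (s - 1) ^ b) + (1 - (1 - y) / (2 - x - y)) * (g (s - 1) ^ a * g 1 ^ b))
    \<le> g x ^ a * g y ^ b"
proof -
  have ab: "a = 0 \<or> a = 1" "b = 0 \<or> b = 1" using assms by auto
  show ?thesis
  proof (cases "x + y < 1")
    case True
    have s0: "x + y > 0" using assms by simp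
    define t where "t = x / (x + y)"
    have e0: "t * (x + y) = x" unfolding t_def using s0 by simp
    have e1: "t * (x + y) = x" by (rule e0)
    have e2: "(1 - t) * (x + y) = y" using e0 by (simp add: algebra_simps)
    have e3: "t * (1 - (x + y)) + (1 - t) = 1 - x"
    proof -
      have "t * (1 - (x + y)) + (1 - t) = 1 - t * (x + y)" by (simp add: algebra_simps)
      then show ?thesis using e0 by simp
    qed
    have e4: "t * (1 - (x + y)) + (1 - t) * (1 - (x + y)) = 1 - (x + y)"
      by (simp add: algebra_simps)
    have e5: "t * 1 + (1 - t) * (1 - (x + y)) = 1 - y"
    proof -
      have "t * 1 + (1 - t) * (1 - (x + y)) = 1 - (x + y) + t * (x + y)" by (simp add: algebra_simps)
      then show ?thesis using e0 by simp
    qed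
    have q1: "0 \<le> x * y" using assms by simp
    have q2: "1 - (x + y) \<le> (1 - x) * (1 - y)" using q1 by (simp add: algebra_simps)
    show ?thesis using g ab True
      apply (simp only: Let_def if_True t_def[symmetric])
      apply (elim disjE)
      using e1 e2 e3 e4 e5 q1 q2 by (simp_all add: algebra_simps)
  next
    case False
    have s2: "2 - x - y > 0" using assms by simp
    define t where "t = (1 - y) / (2 - x - y)"
    have e0: "t * (2 - x - y) = 1 - y" unfolding t_def using s2 by simp
    have e1: "t * 1 + (1 - t) * (x + y - 1) = x"
    proof -
      have "t * 1 + (1 - t) * (x + y - 1) = (x + y - 1) + t * (2 - x - y)" by (simp add: algebra_simps)
      then show ?thesis using e0 by simp
    qed
    have e2: "t * (x + y - 1) + (1 - t) * 1 = y"
    proof -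
      have "t * (x + y - 1) + (1 - t) * 1 = 1 - t * (2 - x - y)" by (simp add: algebra_simps)
      then show ?thesis using e0 by simp
    qed
    have e3: "t * (1 - 1) + (1 - t) * (1 - (x + y - 1)) = 1 - x"
    proof -
      have "t * (1 - 1) + (1 - t) * (1 - (x + y - 1)) = (2 - x - y) - t * (2 - x - y)" by (simp add: algebra_simps)
      then show ?thesis using e0 by simp
    qed
    have e4: "t * (1 - (x + y - 1)) + (1 - t) * (1 - 1) = 1 - y"
    proof -
      have "t * (1 - (x + y - 1)) + (1 - t) * (1 - 1) = t * (2 - x - y)" by (simp add: algebra_simps)
      then show ?thesis using e0 by simp
    qed
    have q1: "x + y - 1 \<le> x * y" using assms mult_nonneg_nonneg[of "1 - x" "1 - y"] by (simp add: algebra_simps)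
    have q2: "0 \<le> (1 - x) * (1 - y)" using assms by simp
    show ?thesis using g ab False
      apply (simp only: Let_def if_False t_def[symmetric])
      apply (elim disjE)
      using e1 e2 e3 e4 q1 q2 by (simp_all add: algebra_simps)
  qed
qed


lemma pa_mono:
  assumes "0 < q i" "q i < 1" "0 < q j" "q j < 1" "i \<noteq> j" "a \<le> 1" "b \<le> 1"
    and g: "g = (\<lambda>z. z) \<or> g = (\<lambda>z. 1 - z)"
  shows "measure_pmf.expectation (pair_aggregate q i j) (\<lambda>q'. g (q' i) ^ a * g (q' j) ^ b)
     \<le> g (q i) ^ a * g (q j) ^ b"
  using pa_exp[of q i j "\<lambda>x y. g x ^ a * g y ^ b", OF assms(1-5)]
    pa_arith[of "q i" "q j" a b g, OF assms(1-4,6,7) g]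
  by (simp add: Let_def)



lemma sum_change:
  fixes q q' :: "nat \<Rightarrow> real"
  assumes "finite A" "i \<noteq> j" "\<forall>k. k \<noteq> i \<and> k \<noteq> j \<longrightarrow> q' k = q k"
  shows "sum q' A = sum q A + (if i \<in> A then q' i - q i else 0) + (if j \<in> A then q' j - q j else 0)"
proof -
  have "sum q' A - sum q A = (\<Sum>k\<in>A. q' k - q k)" by (simp add: sum_subtractf)
  also have "\<dots> = (\<Sum>k\<in>A. (if k = i then q' i - q i else 0) + (if k = j then q' j - q j else 0))"
    using assms(2,3) by (intro sum.cong) auto
  also have "\<dots> = (if i \<in> A then q' i - q i else 0) + (if j \<in> A then q' j - q j else 0)"
    using assms(1) by (simp add: sum.distrib)
  finally show ?thesis by simp
qed

lemma int_zero: "(x::real) \<in> \<int> \<Longrightarrow> -1 < x \<Longrightarrow> x < 1 \<Longrightarrow> x = 0"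
  by (elim Ints_cases) auto

lemma pmf_integral_cong:
  fixes f g :: "'a \<Rightarrow> real"
  shows "(\<And>x. x \<in> set_pmf M \<Longrightarrow> f x = g x) \<Longrightarrow> measure_pmf.expectation M f = measure_pmf.expectation M g"
  by (rule integral_cong_AE) (auto simp: AE_measure_pmf_iff)

lemma pmf_integral_mono:
  fixes f g :: "'a \<Rightarrow> real"
  shows "finite (set_pmf M) \<Longrightarrow> (\<And>x. x \<in> set_pmf M \<Longrightarrow> f x \<le> g x) \<Longrightarrow>
    measure_pmf.expectation M f \<le> measure_pmf.expectation M g"
  by (rule integral_mono_AE) (auto simp: AE_measure_pmf_iff integrable_measure_pmf_finite)

locale hs =
  fixes T :: ktree and n :: nat and p :: "nat \<Rightarrow> real"
    and sel :: "(nat \<Rightarrow> real) \<Rightarrow> nat \<times> nat"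
    and L :: nat and v :: "nat \<Rightarrow> ktree"
  assumes tree: "tree_on T n"
    and p_range: "\<forall>i\<in>{1..n}. 0 \<le> p i \<and> p i \<le> 1"
    and p_int: "(\<Sum>i\<in>{1..n}. p i) \<in> \<int>"
    and sel: "valid_selector T n sel"
    and v_nodes: "\<forall>h\<in>{1..L}. v h \<in> subtrees T"
    and v_disj: "\<forall>h\<in>{1..L}. \<forall>h'\<in>{1..L}. h \<noteq> h' \<longrightarrow> range_of (v h) \<inter> range_of (v h') = {}"
begin

lemma rT: "range_of T = {1..n}" using tree by (simp add: tree_on_def range_of_def)

lemma R_sub: "h \<in> {1..L} \<Longrightarrow> range_of (v h) \<subseteq> {1..n}"
  using subtrees_range v_nodes rT by blast

lemma fin_R: "finite (range_of u)" by (simp add: range_of_def)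

lemma fin_frac: "finite (frac_idx n q)" by (simp add: frac_idx_def)

definition Z :: "nat \<Rightarrow> (nat \<Rightarrow> real) \<Rightarrow> real" where
  "Z h q = (\<Sum>i\<in>range_of (v h). q i) - of_int \<lfloor>\<Sum>i\<in>range_of (v h). p i\<rfloor>"

definition Inv :: "(nat \<Rightarrow> real) \<Rightarrow> bool" where
  "Inv q \<longleftrightarrow> (\<forall>i\<in>{1..n}. 0 \<le> q i \<and> q i \<le> 1) \<and> (\<Sum>i\<in>{1..n}. q i) = (\<Sum>i\<in>{1..n}. p i) \<and>
     (\<forall>h\<in>{1..L}. 0 \<le> Z h q \<and> Z h q \<le> 1 \<and>
        (2 \<le> card (frac_idx n q \<inter> range_of (v h)) \<longrightarrow>
          (\<Sum>i\<in>range_of (v h). q i) = (\<Sum>i\<in>range_of (v h). p i)))"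

lemma adm: "2 \<le> card (frac_idx n q) \<Longrightarrow> admissible_pair T n q (fst (sel q), snd (sel q))"
  using sel by (simp add: valid_selector_def)

lemma adm_facts: "admissible_pair T n q (i, j) \<Longrightarrow>
   i \<noteq> j \<and> 0 < q i \<and> q i < 1 \<and> 0 < q j \<and> q j < 1 \<and> i \<in> {1..n} \<and> j \<in> {1..n}"
  by (auto simp: admissible_pair_def frac_idx_def)

lemma frac_step:
  assumes a: "admissible_pair T n q (i, j)" and q': "q' \<in> set_pmf (pair_aggregate q i j)"
  shows "frac_idx n q' \<subseteq> frac_idx n q \<and> card (frac_idx n q') < card (frac_idx n q)"
proof -
  note F = adm_facts[OF a]
  note P = pa_set[OF F[THEN conjunct2, THEN conjunct1] F[THEN conjunct2, THEN conjunct2, THEN conjunct1]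
      F[THEN conjunct2, THEN conjunct2, THEN conjunct2, THEN conjunct1]
      F[THEN conjunct2, THEN conjunct2, THEN conjunct2, THEN conjunct2, THEN conjunct1] F[THEN conjunct1] q']
  have sub: "frac_idx n q' \<subseteq> frac_idx n q"
  proof
    fix k assume k: "k \<in> frac_idx n q'"
    show "k \<in> frac_idx n q"
    proof (cases "k = i \<or> k = j")
      case True then show ?thesis using F by (auto simp: frac_idx_def)
    next
      case False then show ?thesis using P k by (auto simp: frac_idx_def)
    qed
  qed
  have "i \<notin> frac_idx n q' \<or> j \<notin> frac_idx n q'" using P by (auto simp: frac_idx_def)
  moreover have "i \<in> frac_idx n q" "j \<in> frac_idx n q" using F by (auto simp: frac_idx_def)
  ultimately have "frac_idx n q' \<subset> frac_idx n q" using sub by blast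
  then show ?thesis using psubset_card_mono[OF fin_frac] sub by blast
qed

lemma settled:
  assumes I: "Inv q" and a: "admissible_pair T n q (i, j)" and h: "h \<in> {1..L}"
    and i: "i \<in> range_of (v h)" and j: "j \<notin> range_of (v h)"
  shows "Z h q = q i"
proof -
  define R where "R = range_of (v h)"
  have fr: "frac_idx n q \<inter> R = {i}" unfolding R_def
    using crossing[OF tree _ a i j] v_nodes h by blast
  have RS: "R \<subseteq> {1..n}" unfolding R_def using R_sub[OF h] .
  have "\<forall>k\<in>R - {i}. q k = 0 \<or> q k = 1"
  proof
    fix k assume k: "k \<in> R - {i}"
    then have k1: "k \<in> {1..n}" using RS by auto
    then have "0 \<le> q k \<and> q k \<le> 1" using I by (auto simp: Inv_def)
    moreover have "k \<notin> frac_idx n q" using fr k by auto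
    ultimately show "q k = 0 \<or> q k = 1" using k1 by (auto simp: frac_idx_def)
  qed
  then have ints: "sum q (R - {i}) \<in> \<int>"
  proof (intro Ints_sum)
    fix x assume "\<forall>k\<in>R - {i}. q k = 0 \<or> q k = 1" "x \<in> R - {i}"
    then have "q x = 0 \<or> q x = 1" by blast
    then show "q x \<in> \<int>" by auto
  qed
  have "sum q R = q i + sum q (R - {i})" using sum.remove[OF fin_R i] unfolding R_def by simp
  then have d: "Z h q - q i = sum q (R - {i}) - of_int \<lfloor>\<Sum>i\<in>R. p i\<rfloor>" unfolding Z_def R_def by simp
  have "Z h q - q i \<in> \<int>" unfolding d using ints by (intro Ints_diff) auto
  moreover have "0 \<le> Z h q" "Z h q \<le> 1" using I h by (auto simp: Inv_def)
  moreover have "0 < q i" "q i < 1" using adm_facts[OF a] by auto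
  ultimately have "Z h q - q i = 0" by (intro int_zero) auto
  then show ?thesis by simp
qed

lemma settled_j:
  assumes I: "Inv q" and a: "admissible_pair T n q (i, j)" and h: "h \<in> {1..L}"
    and j: "j \<in> range_of (v h)" and i: "i \<notin> range_of (v h)"
  shows "Z h q = q j"
  using settled[OF I _ h j i] a adm_sym by blast

lemma crossing_card:
  assumes a: "admissible_pair T n q (i, j)" and h: "h \<in> {1..L}"
    and i: "i \<in> range_of (v h)" and j: "j \<notin> range_of (v h)"
  shows "card (frac_idx n q \<inter> range_of (v h)) = 1"
  using crossing[OF tree _ a i j] v_nodes h by simp

lemma Z_step:
  assumes I: "Inv q" and a: "admissible_pair T n q (i, j)" and q': "q' \<in> set_pmf (pair_aggregate q i j)"
    and h: "h \<in> {1..L}"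
  shows "Z h q' = (if i \<in> range_of (v h) \<and> j \<notin> range_of (v h) then q' i
      else if j \<in> range_of (v h) \<and> i \<notin> range_of (v h) then q' j else Z h q)"
proof -
  note F = adm_facts[OF a]
  have P: "(\<forall>k. k \<noteq> i \<and> k \<noteq> j \<longrightarrow> q' k = q k) \<and> q' i + q' j = q i + q j"
    using pa_set[of q i j q'] F q' by auto
  have ch: "Z h q' = Z h q + (if i \<in> range_of (v h) then q' i - q i else 0)
     + (if j \<in> range_of (v h) then q' j - q j else 0)"
    unfolding Z_def using sum_change[OF fin_R, of i j q' q] F P by simp
  show ?thesis
  proof (cases "i \<in> range_of (v h) \<and> j \<notin> range_of (v h)")
    case True then show ?thesis using ch settled[OF I a h] by simp
  next
    case False
    show ?thesis
    proof (cases "j \<in> range_of (v h) \<and> i \<notin> range_of (v h)")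
      case True then show ?thesis using ch settled_j[OF I a h] by simp
    next
      case False2: False
      then show ?thesis using False ch P by (auto split: if_splits)
    qed
  qed
qed

lemma inv_step:
  assumes I: "Inv q" and a: "admissible_pair T n q (i, j)" and q': "q' \<in> set_pmf (pair_aggregate q i j)"
  shows "Inv q'"
proof -
  note F = adm_facts[OF a]
  have Ir: "\<forall>k\<in>{1..n}. 0 \<le> q k \<and> q k \<le> 1" and Is: "(\<Sum>k\<in>{1..n}. q k) = (\<Sum>k\<in>{1..n}. p k)"
    and Ih: "\<forall>h\<in>{1..L}. 0 \<le> Z h q \<and> Z h q \<le> 1 \<and>
        (2 \<le> card (frac_idx n q \<inter> range_of (v h)) \<longrightarrow>
          (\<Sum>i\<in>range_of (v h). q i) = (\<Sum>i\<in>range_of (v h). p i))"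
    using I unfolding Inv_def by blast+
  have P: "(\<forall>k. k \<noteq> i \<and> k \<noteq> j \<longrightarrow> q' k = q k) \<and> q' i + q' j = q i + q j \<and>
     0 \<le> q' i \<and> q' i \<le> 1 \<and> 0 \<le> q' j \<and> q' j \<le> 1"
    using pa_set[of q i j q'] F q' by blast
  have I1: "\<forall>k\<in>{1..n}. 0 \<le> q' k \<and> q' k \<le> 1"
  proof
    fix k assume k: "k \<in> {1..n}"
    show "0 \<le> q' k \<and> q' k \<le> 1"
    proof (cases "k = i \<or> k = j")
      case True then show ?thesis using P by blast
    next
      case False then have "q' k = q k" using P by blast
      then show ?thesis using Ir k by simp
    qed
  qed
  have I2: "(\<Sum>k\<in>{1..n}. q' k) = (\<Sum>k\<in>{1..n}. p k)"
  proof -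
    have "(\<Sum>k\<in>{1..n}. q' k) = (\<Sum>k\<in>{1..n}. q k) + (q' i - q i) + (q' j - q j)"
      using sum_change[of "{1..n}" i j q' q] F P by simp
    then show ?thesis using Is P by simp
  qed
  have I3: "\<forall>h\<in>{1..L}. 0 \<le> Z h q' \<and> Z h q' \<le> 1 \<and>
        (2 \<le> card (frac_idx n q' \<inter> range_of (v h)) \<longrightarrow>
          (\<Sum>i\<in>range_of (v h). q' i) = (\<Sum>i\<in>range_of (v h). p i))"
  proof
    fix h assume h: "h \<in> {1..L}"
    have zq: "0 \<le> Z h q \<and> Z h q \<le> 1" using Ih h by blast
    have z: "0 \<le> Z h q' \<and> Z h q' \<le> 1"
      unfolding Z_step[OF I a q' h] using P zq by simp
    have "2 \<le> card (frac_idx n q' \<inter> range_of (v h)) \<longrightarrow>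
          (\<Sum>i\<in>range_of (v h). q' i) = (\<Sum>i\<in>range_of (v h). p i)"
    proof
      assume c2: "2 \<le> card (frac_idx n q' \<inter> range_of (v h))"
      have sub: "frac_idx n q' \<inter> range_of (v h) \<subseteq> frac_idx n q \<inter> range_of (v h)"
        using frac_step[OF a q'] by blast
      have fin: "finite (frac_idx n q \<inter> range_of (v h))" using fin_frac by simp
      have c2': "2 \<le> card (frac_idx n q \<inter> range_of (v h))"
        using c2 card_mono[OF fin sub] by linarith
      then have s: "(\<Sum>i\<in>range_of (v h). q i) = (\<Sum>i\<in>range_of (v h). p i)" using Ih h by blast
      have nc1: "\<not> (i \<in> range_of (v h) \<and> j \<notin> range_of (v h))"
      proof
        assume "i \<in> range_of (v h) \<and> j \<notin> range_of (v h)"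
        then have "card (frac_idx n q \<inter> range_of (v h)) = 1" using crossing_card[OF a h] by blast
        then show False using c2' by simp
      qed
      have a': "admissible_pair T n q (j, i)" using a adm_sym by blast
      have nc2: "\<not> (j \<in> range_of (v h) \<and> i \<notin> range_of (v h))"
      proof
        assume "j \<in> range_of (v h) \<and> i \<notin> range_of (v h)"
        then have "card (frac_idx n q \<inter> range_of (v h)) = 1" using crossing_card[OF a' h] by blast
        then show False using c2' by simp
      qed
      have e: "sum q' (range_of (v h)) = sum q (range_of (v h)) + (if i \<in> range_of (v h) then q' i - q i else 0)
          + (if j \<in> range_of (v h) then q' j - q j else 0)"
        using sum_change[OF fin_R, of i j q' q "v h"] F P by blast
      have "(\<Sum>i\<in>range_of (v h). q' i) = (\<Sum>i\<in>range_of (v h). q i)"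
        using e nc1 nc2 P by (cases "i \<in> range_of (v h)") auto
      then show "(\<Sum>i\<in>range_of (v h). q' i) = (\<Sum>i\<in>range_of (v h). p i)" using s by simp
    qed
    then show "0 \<le> Z h q' \<and> Z h q' \<le> 1 \<and>
        (2 \<le> card (frac_idx n q' \<inter> range_of (v h)) \<longrightarrow>
          (\<Sum>i\<in>range_of (v h). q' i) = (\<Sum>i\<in>range_of (v h). p i))" using z by simp
  qed
  show ?thesis unfolding Inv_def using I1 I2 I3 by blast
qed

lemma H_finite: "finite (set_pmf (hsum_iter n sel k q))"
  by (induction k arbitrary: q) (auto simp: pa_finite)

lemma H_card: "q' \<in> set_pmf (hsum_iter n sel k q) \<Longrightarrow>
   card (frac_idx n q') \<le> 1 \<or> card (frac_idx n q') + k \<le> card (frac_idx n q)"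
proof (induction k arbitrary: q q')
  case 0 then show ?case by simp
next
  case (Suc k)
  show ?case
  proof (cases "2 \<le> card (frac_idx n q)")
    case True
    then obtain q1 where q1: "q1 \<in> set_pmf (pair_aggregate q (fst (sel q)) (snd (sel q)))"
      and q'': "q' \<in> set_pmf (hsum_iter n sel k q1)"
      using Suc.prems by auto
    have "card (frac_idx n q1) < card (frac_idx n q)" using frac_step[OF adm[OF True] q1] by blast
    then show ?thesis using Suc.IH[OF q''] by linarith
  next
    case False then show ?thesis using Suc.prems by simp
  qed
qed

lemma H_inv: "Inv q \<Longrightarrow> q' \<in> set_pmf (hsum_iter n sel k q) \<Longrightarrow> Inv q'"
proof (induction k arbitrary: q q')
  case 0 then show ?case by simp
next
  case (Suc k)
  show ?case
  proof (cases "2 \<le> card (frac_idx n q)")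
    case True
    then obtain q1 where q1: "q1 \<in> set_pmf (pair_aggregate q (fst (sel q)) (snd (sel q)))"
      and q'': "q' \<in> set_pmf (hsum_iter n sel k q1)"
      using Suc.prems by auto
    have "Inv q1" using inv_step[OF Suc.prems(1) adm[OF True] q1] .
    then show ?thesis using Suc.IH[OF _ q''] by blast
  next
    case False then show ?thesis using Suc.prems by simp
  qed
qed

lemma one_step:
  assumes I: "Inv q" and a: "admissible_pair T n q (i, j)" and J: "J \<subseteq> {1..L}"
    and g: "g = (\<lambda>z. z) \<or> g = (\<lambda>z. 1 - z)"
  shows "measure_pmf.expectation (pair_aggregate q i j) (\<lambda>q'. \<Prod>h\<in>J. g (Z h q')) \<le> (\<Prod>h\<in>J. g (Z h q))"
proof -
  note F = adm_facts[OF a]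
  have Ih: "\<forall>h\<in>{1..L}. 0 \<le> Z h q \<and> Z h q \<le> 1" using I unfolding Inv_def by blast
  define Ji where "Ji = {h\<in>J. i \<in> range_of (v h) \<and> j \<notin> range_of (v h)}"
  define Jj where "Jj = {h\<in>J. j \<in> range_of (v h) \<and> i \<notin> range_of (v h)}"
  define J0 where "J0 = J - Ji - Jj"
  have finJ: "finite J" using J finite_subset by blast
  have fin0: "finite J0" "finite Ji" "finite Jj" using finJ unfolding J0_def Ji_def Jj_def by auto
  have Jeq: "J = J0 \<union> (Ji \<union> Jj)" unfolding J0_def Ji_def Jj_def by auto
  have dj: "J0 \<inter> (Ji \<union> Jj) = {}" "Ji \<inter> Jj = {}" unfolding J0_def Ji_def Jj_def by auto
  have dec: "(\<Prod>h\<in>J. W h) = (\<Prod>h\<in>J0. W h) * ((\<Prod>h\<in>Ji. W h) * (\<Prod>h\<in>Jj. W h))" for W :: "nat \<Rightarrow> real"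
  proof -
    have "(\<Prod>h\<in>J. W h) = (\<Prod>h\<in>J0 \<union> (Ji \<union> Jj). W h)" using Jeq by simp
    also have "\<dots> = (\<Prod>h\<in>J0. W h) * ((\<Prod>h\<in>Ji. W h) * (\<Prod>h\<in>Jj. W h))"
      using fin0 dj by (simp add: prod.union_disjoint)
    finally show ?thesis .
  qed
  have ci: "card Ji \<le> 1"
  proof -
    have "\<forall>x\<in>Ji. \<forall>y\<in>Ji. x = y"
    proof (intro ballI)
      fix x y assume xy: "x \<in> Ji" "y \<in> Ji"
      then have "x \<in> {1..L}" "y \<in> {1..L}" "i \<in> range_of (v x)" "i \<in> range_of (v y)"
        using J unfolding Ji_def by auto
      then show "x = y" using v_disj by blast
    qed
    then show ?thesis using card_le_Suc0_iff_eq[OF fin0(2)] by simp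
  qed
  have cj: "card Jj \<le> 1"
  proof -
    have "\<forall>x\<in>Jj. \<forall>y\<in>Jj. x = y"
    proof (intro ballI)
      fix x y assume xy: "x \<in> Jj" "y \<in> Jj"
      then have "x \<in> {1..L}" "y \<in> {1..L}" "j \<in> range_of (v x)" "j \<in> range_of (v y)"
        using J unfolding Jj_def by auto
      then show "x = y" using v_disj by blast
    qed
    then show ?thesis using card_le_Suc0_iff_eq[OF fin0(3)] by simp
  qed
  define C where "C = (\<Prod>h\<in>J0. g (Z h q))"
  have C0: "0 \<le> C" unfolding C_def
  proof (rule prod_nonneg)
    fix h assume "h \<in> J0"
    then have "h \<in> {1..L}" using J unfolding J0_def by auto
    then have "0 \<le> Z h q \<and> Z h q \<le> 1" using Ih by blast
    then show "0 \<le> g (Z h q)" using g by auto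
  qed
  have eqq': "(\<Prod>h\<in>J. g (Z h q')) = C * (g (q' i) ^ card Ji * g (q' j) ^ card Jj)"
    if q': "q' \<in> set_pmf (pair_aggregate q i j)" for q'
  proof -
    have "(\<Prod>h\<in>J0. g (Z h q')) = C" unfolding C_def
    proof (rule prod.cong[OF refl])
      fix h assume h: "h \<in> J0"
      then have hL: "h \<in> {1..L}" using J unfolding J0_def by auto
      have n12: "\<not> (i \<in> range_of (v h) \<and> j \<notin> range_of (v h))" "\<not> (j \<in> range_of (v h) \<and> i \<notin> range_of (v h))"
        using h unfolding J0_def Ji_def Jj_def by auto
      show "g (Z h q') = g (Z h q)" using Z_step[OF I a q' hL] n12 by simp
    qed
    moreover have "(\<Prod>h\<in>Ji. g (Z h q')) = g (q' i) ^ card Ji"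
    proof -
      have "(\<Prod>h\<in>Ji. g (Z h q')) = (\<Prod>h\<in>Ji. g (q' i))"
      proof (rule prod.cong[OF refl])
        fix h assume h: "h \<in> Ji"
        then have hL: "h \<in> {1..L}" and c: "i \<in> range_of (v h) \<and> j \<notin> range_of (v h)" using J unfolding Ji_def by auto
        then show "g (Z h q') = g (q' i)" using Z_step[OF I a q' hL] by simp
      qed
      then show ?thesis by simp
    qed
    moreover have "(\<Prod>h\<in>Jj. g (Z h q')) = g (q' j) ^ card Jj"
    proof -
      have "(\<Prod>h\<in>Jj. g (Z h q')) = (\<Prod>h\<in>Jj. g (q' j))"
      proof (rule prod.cong[OF refl])
        fix h assume h: "h \<in> Jj"
        then have hL: "h \<in> {1..L}" and c: "j \<in> range_of (v h) \<and> i \<notin> range_of (v h)" using J unfolding Jj_def by auto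
        then show "g (Z h q') = g (q' j)" using Z_step[OF I a q' hL] by simp
      qed
      then show ?thesis by simp
    qed
    ultimately show ?thesis using dec[of "\<lambda>h. g (Z h q')"] by simp
  qed
  have eqq: "(\<Prod>h\<in>J. g (Z h q)) = C * (g (q i) ^ card Ji * g (q j) ^ card Jj)"
  proof -
    have "(\<Prod>h\<in>Ji. g (Z h q)) = (\<Prod>h\<in>Ji. g (q i))"
    proof (rule prod.cong[OF refl])
      fix h assume h: "h \<in> Ji"
      then have "h \<in> {1..L}" "i \<in> range_of (v h)" "j \<notin> range_of (v h)" using J unfolding Ji_def by auto
      then show "g (Z h q) = g (q i)" using settled[OF I a] by simp
    qed
    moreover have "(\<Prod>h\<in>Jj. g (Z h q)) = (\<Prod>h\<in>Jj. g (q j))"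
    proof (rule prod.cong[OF refl])
      fix h assume h: "h \<in> Jj"
      then have "h \<in> {1..L}" "j \<in> range_of (v h)" "i \<notin> range_of (v h)" using J unfolding Jj_def by auto
      then show "g (Z h q) = g (q j)" using settled_j[OF I a] by simp
    qed
    ultimately show ?thesis using dec[of "\<lambda>h. g (Z h q)"] unfolding C_def by simp
  qed
  have "measure_pmf.expectation (pair_aggregate q i j) (\<lambda>q'. \<Prod>h\<in>J. g (Z h q'))
      = measure_pmf.expectation (pair_aggregate q i j) (\<lambda>q'. C * (g (q' i) ^ card Ji * g (q' j) ^ card Jj))"
    by (rule pmf_integral_cong) (rule eqq')
  also have "\<dots> = C * measure_pmf.expectation (pair_aggregate q i j) (\<lambda>q'. g (q' i) ^ card Ji * g (q' j) ^ card Jj)"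
    by simp
  also have "\<dots> \<le> C * (g (q i) ^ card Ji * g (q j) ^ card Jj)"
    by (rule mult_left_mono[OF pa_mono C0]) (use F ci cj g in auto)
  also have "\<dots> = (\<Prod>h\<in>J. g (Z h q))" using eqq by simp
  finally show ?thesis .
qed

lemma H_prod:
  assumes I: "Inv q" and J: "J \<subseteq> {1..L}" and g: "g = (\<lambda>z. z) \<or> g = (\<lambda>z. 1 - z)"
  shows "measure_pmf.expectation (hsum_iter n sel k q) (\<lambda>q'. \<Prod>h\<in>J. g (Z h q')) \<le> (\<Prod>h\<in>J. g (Z h q))"
  using I
proof (induction k arbitrary: q)
  case 0 show ?case by simp
next
  case (Suc k)
  show ?case
  proof (cases "2 \<le> card (frac_idx n q)")
    case False then show ?thesis by simp
  next
    case True
    define i where "i = fst (sel q)"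
    define j where "j = snd (sel q)"
    have a: "admissible_pair T n q (i, j)" using adm[OF True] unfolding i_def j_def .
    define M where "M = pair_aggregate q i j"
    define FF where "FF = (\<lambda>q'. \<Prod>h\<in>J. g (Z h q'))"
    have "hsum_iter n sel (Suc k) q = M \<bind> hsum_iter n sel k" using True unfolding i_def j_def M_def by simp
    then have "measure_pmf.expectation (hsum_iter n sel (Suc k) q) FF =
        (\<Sum>x\<in>set_pmf M. pmf M x *\<^sub>R measure_pmf.expectation (hsum_iter n sel k x) FF)"
      using pmf_expectation_bind[of "set_pmf M" "hsum_iter n sel k" M FF] pa_finite H_finite
      unfolding M_def by simp
    also have "\<dots> \<le> (\<Sum>x\<in>set_pmf M. pmf M x *\<^sub>R FF x)"
    proof (rule sum_mono)
      fix x assume x: "x \<in> set_pmf M"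
      have "Inv x" using inv_step[OF Suc.prems a] x unfolding M_def by blast
      then have "measure_pmf.expectation (hsum_iter n sel k x) FF \<le> FF x" using Suc.IH unfolding FF_def by blast
      then show "pmf M x *\<^sub>R measure_pmf.expectation (hsum_iter n sel k x) FF \<le> pmf M x *\<^sub>R FF x"
        by (simp add: mult_left_mono)
    qed
    also have "\<dots> = measure_pmf.expectation M FF"
      using integral_measure_pmf[of "set_pmf M" M FF] pa_finite unfolding M_def by simp
    also have "\<dots> \<le> (\<Prod>h\<in>J. g (Z h q))" unfolding M_def FF_def by (rule one_step[OF Suc.prems a J g])
    finally show ?thesis unfolding FF_def .
  qed
qed

lemma frac_bounds: "0 \<le> x - of_int \<lfloor>x\<rfloor> \<and> x - of_int \<lfloor>x\<rfloor> < (1::real)"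
  using of_int_floor_le[of x] real_of_int_floor_add_one_gt[of x] by linarith

lemma Inv_p: "Inv p"
proof -
  have "\<forall>h\<in>{1..L}. 0 \<le> Z h p \<and> Z h p \<le> 1"
    unfolding Z_def using frac_bounds by (meson less_le_not_le linear order_trans)
  then show ?thesis unfolding Inv_def using p_range by simp
qed

lemma sum01_int:
  assumes "\<forall>k\<in>A. q k = 0 \<or> q k = (1::real)"
  shows "sum q A \<in> \<int>"
proof (intro Ints_sum)
  fix x assume "x \<in> A"
  then have "q x = 0 \<or> q x = 1" using assms by blast
  then show "q x \<in> \<int>" by auto
qed

lemma nonfrac01:
  assumes "Inv q" "k \<in> {1..n}" "k \<notin> frac_idx n q"
  shows "q k = 0 \<or> q k = 1"
proof -
  have "0 \<le> q k \<and> q k \<le> 1" using assms(1,2) unfolding Inv_def by blast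
  then show ?thesis using assms(2,3) unfolding frac_idx_def by auto
qed

lemma final_state:
  assumes q: "q \<in> set_pmf (hsum_iter n sel n p)"
  shows "Inv q \<and> frac_idx n q = {}"
proof -
  have I: "Inv q" using H_inv[OF Inv_p q] .
  have "frac_idx n p \<subseteq> {1..n}" by (auto simp: frac_idx_def)
  then have "card (frac_idx n p) \<le> n" using card_mono[of "{1..n}" "frac_idx n p"] by simp
  then have c1: "card (frac_idx n q) \<le> 1" using H_card[OF q] by linarith
  have "frac_idx n q = {}"
  proof (rule ccontr)
    assume ne: "frac_idx n q \<noteq> {}"
    then have "card (frac_idx n q) = 1" using c1 fin_frac[of q] by (simp add: card_gt_0_iff le_Suc_eq)
    then obtain i where fi: "frac_idx n q = {i}" using card_1_singletonE by blast
    then have i: "i \<in> {1..n}" "0 < q i" "q i < 1" by (auto simp: frac_idx_def)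
    have "\<forall>k\<in>{1..n} - {i}. q k = 0 \<or> q k = 1" using nonfrac01[OF I] fi by blast
    then have r: "sum q ({1..n} - {i}) \<in> \<int>" by (rule sum01_int)
    have "sum q {1..n} = q i + sum q ({1..n} - {i})" using sum.remove[of "{1..n}" i q] i by simp
    moreover have "sum q {1..n} \<in> \<int>" using I p_int unfolding Inv_def by simp
    ultimately have "q i \<in> \<int>" using r by (metis Ints_diff add_diff_cancel_right')
    then have "q i = 0" using i by (intro int_zero) auto
    then show False using i by simp
  qed
  then show ?thesis using I by simp
qed

lemma final_Y:
  assumes q: "q \<in> set_pmf (hsum_iter n sel n p)" and h: "h \<in> {1..L}"
  shows "real (card ({i \<in> {1..n}. q i = 1} \<inter> range_of (v h))) - of_int \<lfloor>\<Sum>i\<in>range_of (v h). p i\<rfloor> = Z h q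
    \<and> Z h q \<in> {0, 1}"
proof -
  note F = final_state[OF q]
  define R where "R = range_of (v h)"
  have RS: "R \<subseteq> {1..n}" using R_sub[OF h] unfolding R_def .
  have finR: "finite R" unfolding R_def by (rule fin_R)
  have b: "\<forall>k\<in>R. q k = 0 \<or> q k = 1" using nonfrac01[of q] F RS by blast
  have "sum q R = (\<Sum>k\<in>R. if q k = 1 then 1 else 0)" using b by (intro sum.cong) auto
  also have "\<dots> = real (card {k\<in>R. q k = 1})" using finR by (simp add: sum.If_cases Int_def)
  also have "{k\<in>R. q k = 1} = {i \<in> {1..n}. q i = 1} \<inter> R" using RS by auto
  finally have e: "real (card ({i \<in> {1..n}. q i = 1} \<inter> R)) - of_int \<lfloor>\<Sum>i\<in>R. p i\<rfloor> = Z h q"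
    unfolding Z_def R_def by simp
  have zi: "Z h q \<in> \<int>" using e[symmetric] by simp
  have z01: "0 \<le> Z h q" "Z h q \<le> 1" using F h unfolding Inv_def by auto
  from zi obtain m where m: "Z h q = of_int m" by (elim Ints_cases)
  then have "0 \<le> m" "m \<le> 1" using z01 by auto
  then have "m = 0 \<or> m = 1" by auto
  then have "Z h q \<in> {0, 1}" using m by auto
  then show ?thesis using e unfolding R_def by simp
qed

lemma E_one_minus:
  "measure_pmf.expectation (hsum_iter n sel k q) (\<lambda>x. 1 - Z h x) = 1 - measure_pmf.expectation (hsum_iter n sel k q) (Z h)"
  using integrable_measure_pmf_finite[OF H_finite, of k q "Z h"]
  by (simp add: integral_diff)

lemma E_Z: "h \<in> {1..L} \<Longrightarrow> measure_pmf.expectation (hsum_iter n sel n p) (Z h) = Z h p"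
proof -
  assume h: "h \<in> {1..L}"
  have 1: "measure_pmf.expectation (hsum_iter n sel n p) (Z h) \<le> Z h p"
    using H_prod[OF Inv_p, of "{h}" "\<lambda>z. z" n] h by simp
  have 2: "measure_pmf.expectation (hsum_iter n sel n p) (\<lambda>x. 1 - Z h x) \<le> 1 - Z h p"
    using H_prod[OF Inv_p, of "{h}" "\<lambda>z. 1 - z" n] h by simp
  show ?thesis using 1 2 E_one_minus[of n p h] by linarith
qed

end



theorem lemma4:
  fixes T :: ktree and n :: nat and p :: "nat \<Rightarrow> real"
    and sel :: "(nat \<Rightarrow> real) \<Rightarrow> nat \<times> nat"
    and L :: nat and v :: "nat \<Rightarrow> ktree"
  assumes tree: "tree_on T n"
    and p_range: "\<forall>i\<in>{1..n}. 0 \<le> p i \<and> p i \<le> 1"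
    and p_int: "(\<Sum>i\<in>{1..n}. p i) \<in> \<int>"
    and sel: "valid_selector T n sel"
    and v_nodes: "\<forall>h\<in>{1..L}. v h \<in> subtrees T"
    and v_disj: "\<forall>h\<in>{1..L}. \<forall>h'\<in>{1..L}. h \<noteq> h' \<longrightarrow> range_of (v h) \<inter> range_of (v h') = {}"
  defines "S \<equiv> hier_summarize n sel p"
    and "Q \<equiv> (\<Union>h\<in>{1..L}. range_of (v h))"
    and "Y \<equiv> \<lambda>h (X :: nat set). real (card (X \<inter> range_of (v h)))
                   - of_int \<lfloor>\<Sum>i\<in>range_of (v h). p i\<rfloor>"
    and "\<mu> \<equiv> (\<Sum>h\<in>{1..L}. (\<Sum>i\<in>range_of (v h). p i) - of_int \<lfloor>\<Sum>i\<in>range_of (v h). p i\<rfloor>)"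
  shows "(\<forall>X\<in>set_pmf S. \<bar>real (card (X \<inter> Q)) - (\<Sum>i\<in>Q. p i)\<bar> \<le> real L)
    \<and> \<mu> \<le> real L
    \<and> (\<forall>X\<in>set_pmf S. \<forall>h\<in>{1..L}. Y h X \<in> {0, 1})
    \<and> (\<forall>h\<in>{1..L}. measure_pmf.expectation S (Y h) = (\<Sum>i\<in>range_of (v h). p i) - of_int \<lfloor>\<Sum>i\<in>range_of (v h). p i\<rfloor>)
    \<and> (\<forall>J\<subseteq>{1..L}. measure_pmf.expectation S (\<lambda>X. \<Prod>h\<in>J. Y h X)
            \<le> (\<Prod>h\<in>J. measure_pmf.expectation S (Y h)))
    \<and> (\<forall>J\<subseteq>{1..L}. measure_pmf.expectation S (\<lambda>X. \<Prod>h\<in>J. 1 - Y h X)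
            \<le> (\<Prod>h\<in>J. 1 - measure_pmf.expectation S (Y h)))
    \<and> (\<forall>X\<in>set_pmf S. real (card (X \<inter> Q)) - (\<Sum>i\<in>Q. p i) = (\<Sum>h\<in>{1..L}. Y h X) - \<mu>)"
proof -
  interpret hs T n p sel L v by (rule hs.intro[OF tree p_range p_int sel v_nodes v_disj])
  define H where "H = hsum_iter n sel n p"
  define f where "f = (\<lambda>q::nat\<Rightarrow>real. {i \<in> {1..n}. q i = 1})"
  have S_eq: "S = map_pmf f H" unfolding S_def hier_summarize_def f_def H_def ..
  have YZ: "Y h (f q) = Z h q \<and> Z h q \<in> {0, 1}" if "q \<in> set_pmf H" "h \<in> {1..L}" for q h
    using final_Y[of q h] that unfolding Y_def f_def H_def by simp
  have finL: "finite {1..L}" by simp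
  have EY: "measure_pmf.expectation S (Y h) = Z h p" if h: "h \<in> {1..L}" for h
  proof -
    have "measure_pmf.expectation S (Y h) = measure_pmf.expectation H (\<lambda>q. Y h (f q))"
      unfolding S_eq by simp
    also have "\<dots> = measure_pmf.expectation H (Z h)"
      by (rule pmf_integral_cong) (use YZ h in blast)
    also have "\<dots> = Z h p" unfolding H_def by (rule E_Z[OF h])
    finally show ?thesis .
  qed
  have Zp: "Z h p = (\<Sum>i\<in>range_of (v h). p i) - of_int \<lfloor>\<Sum>i\<in>range_of (v h). p i\<rfloor>" for h
    unfolding Z_def ..
  have C5: "measure_pmf.expectation S (\<lambda>X. \<Prod>h\<in>J. Y h X) \<le> (\<Prod>h\<in>J. measure_pmf.expectation S (Y h))"
    if J: "J \<subseteq> {1..L}" for J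
  proof -
    have "measure_pmf.expectation S (\<lambda>X. \<Prod>h\<in>J. Y h X) = measure_pmf.expectation H (\<lambda>q. \<Prod>h\<in>J. Y h (f q))"
      unfolding S_eq by simp
    also have "\<dots> = measure_pmf.expectation H (\<lambda>q. \<Prod>h\<in>J. (\<lambda>z. z) (Z h q))"
    proof (rule pmf_integral_cong)
      fix q assume q: "q \<in> set_pmf H"
      show "(\<Prod>h\<in>J. Y h (f q)) = (\<Prod>h\<in>J. (\<lambda>z. z) (Z h q))"
        by (rule prod.cong[OF refl]) (use YZ q J in auto)
    qed
    also have "\<dots> \<le> (\<Prod>h\<in>J. (\<lambda>z. z) (Z h p))" unfolding H_def by (rule H_prod[OF Inv_p J]) simp
    also have "\<dots> = (\<Prod>h\<in>J. measure_pmf.expectation S (Y h))"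
      by (rule prod.cong[OF refl]) (use EY J in auto)
    finally show ?thesis .
  qed
  have C6: "measure_pmf.expectation S (\<lambda>X. \<Prod>h\<in>J. 1 - Y h X) \<le> (\<Prod>h\<in>J. 1 - measure_pmf.expectation S (Y h))"
    if J: "J \<subseteq> {1..L}" for J
  proof -
    have "measure_pmf.expectation S (\<lambda>X. \<Prod>h\<in>J. 1 - Y h X) = measure_pmf.expectation H (\<lambda>q. \<Prod>h\<in>J. 1 - Y h (f q))"
      unfolding S_eq by simp
    also have "\<dots> = measure_pmf.expectation H (\<lambda>q. \<Prod>h\<in>J. (\<lambda>z. 1 - z) (Z h q))"
    proof (rule pmf_integral_cong)
      fix q assume q: "q \<in> set_pmf H"
      show "(\<Prod>h\<in>J. 1 - Y h (f q)) = (\<Prod>h\<in>J. (\<lambda>z. 1 - z) (Z h q))"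
        by (rule prod.cong[OF refl]) (use YZ q J in auto)
    qed
    also have "\<dots> \<le> (\<Prod>h\<in>J. (\<lambda>z. 1 - z) (Z h p))" unfolding H_def by (rule H_prod[OF Inv_p J]) simp
    also have "\<dots> = (\<Prod>h\<in>J. 1 - measure_pmf.expectation S (Y h))"
      by (rule prod.cong[OF refl]) (use EY J in auto)
    finally show ?thesis .
  qed
  have C7: "real (card (X \<inter> Q)) - (\<Sum>i\<in>Q. p i) = (\<Sum>h\<in>{1..L}. Y h X) - \<mu>"
    if X: "X \<in> set_pmf S" for X
  proof -
    have dis: "\<forall>h\<in>{1..L}. \<forall>h'\<in>{1..L}. h \<noteq> h' \<longrightarrow> (X \<inter> range_of (v h)) \<inter> (X \<inter> range_of (v h')) = {}"
      using v_disj by blast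
    have "X \<inter> Q = (\<Union>h\<in>{1..L}. X \<inter> range_of (v h))" unfolding Q_def by blast
    then have "card (X \<inter> Q) = (\<Sum>h\<in>{1..L}. card (X \<inter> range_of (v h)))"
      using card_UN_disjoint[OF finL _ dis] fin_R by simp
    then have c: "real (card (X \<inter> Q)) = (\<Sum>h\<in>{1..L}. real (card (X \<inter> range_of (v h))))" by simp
    have s: "(\<Sum>i\<in>Q. p i) = (\<Sum>h\<in>{1..L}. \<Sum>i\<in>range_of (v h). p i)"
      unfolding Q_def using sum.UNION_disjoint[OF finL _ v_disj] fin_R by simp
    show ?thesis unfolding c s Y_def \<mu>_def by (simp add: sum_subtractf)
  qed
  have Y01: "\<forall>X\<in>set_pmf S. \<forall>h\<in>{1..L}. Y h X \<in> {0, 1}"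
  proof (intro ballI)
    fix X h assume X: "X \<in> set_pmf S" and h: "h \<in> {1..L}"
    then obtain q where q: "q \<in> set_pmf H" "X = f q" unfolding S_eq by auto
    show "Y h X \<in> {0, 1}" using YZ[OF q(1) h] q(2) by simp
  qed
  have mu0: "0 \<le> \<mu>" unfolding \<mu>_def by (rule sum_nonneg) (use frac_bounds in auto)
  have muL: "\<mu> \<le> real L"
  proof -
    have "\<mu> \<le> real (card {1..L}) * 1" unfolding \<mu>_def
      by (rule sum_bounded_above) (use frac_bounds in \<open>auto intro: less_imp_le\<close>)
    then show ?thesis by simp
  qed
  have C1: "\<bar>real (card (X \<inter> Q)) - (\<Sum>i\<in>Q. p i)\<bar> \<le> real L" if X: "X \<in> set_pmf S" for X
  proof -
    have yb: "0 \<le> Y h X \<and> Y h X \<le> 1" if h: "h \<in> {1..L}" for h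
    proof -
      have "Y h X \<in> {0, 1}" using Y01 X h by blast
      then show ?thesis by auto
    qed
    have "0 \<le> (\<Sum>h\<in>{1..L}. Y h X)" by (rule sum_nonneg) (use yb in blast)
    moreover have "(\<Sum>h\<in>{1..L}. Y h X) \<le> real (card {1..L}) * 1"
      by (rule sum_bounded_above) (use yb in blast)
    ultimately show ?thesis unfolding C7[OF X] using mu0 muL by simp
  qed
  show ?thesis using C1 muL Y01 EY Zp C5 C6 C7 by simp
qed

end
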